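(* Let $n\geq2$, $m\geq1$ be integers, $\alpha,\beta\in\mathbb{C}$, let $\psi\in\mathbb{R}$ satisfy $\beta-\alpha=|\beta-\alpha|e^{i\psi}$, and let $T^0_{\alpha,\beta}=e^{-i\psi}J_n(0)\oplus|\beta-\alpha|I_m\in M_{n+m}(\mathbb{C})$. Let $k\in\{1,\ldots,n\}$. Then for $\theta\in[0,2\pi]$, $$\lambda_k(\operatorname{Re}(e^{i\theta}T^0_{\alpha,\beta}))=\begin{cases}\cos\psi_{k,m}, & \theta\in C_{k,m},\\ |\beta-\alpha|\cos\theta, & \theta\in[0,2\pi]\setminus(D_k\cup C_{k,m}),\\ \cos\phi_k, & \theta\in D_k.\end{cases}$$
   Context: $J_n(0)$ is the $n\times n$ Jordan block with eigenvalue $0$ (ones on the superdiagonal, zeros elsewhere). For a square matrix $A$, $\operatorname{Re}A=(A+A^* )/2$, and $\lambda_1(A)\geq\lambda_2(A)\geq\cdots$ denote the eigenvalues of the Hermitian matrix in question, in non-increasing order counted with multiplicity. $\phi_k=\frac{k\pi}{n+1}$, $\psi_{k,m}=\frac{(k-m)\pi}{n+1}$; $D_k=\{\theta\in\mathbb{R}:\ |\beta-\alpha|\cos\theta\leq\cos\phi_k\}$; $C_{k,m}=\{\theta\in\mathbb{R}:\ |\beta-\alpha|\cos\theta>\cos\psi_{k,m}\}$ if $k>m$ and $C_{k,m}=\emptyset$ if $k\leq m$. *)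

theory Defs
  imports Complex_Main "Jordan_Normal_Form.Char_Poly" "Jordan_Normal_Form.Schur_Decomposition"
begin

definition jordan0 :: "nat \<Rightarrow> complex mat" where
  "jordan0 n = mat n n (\<lambda>(i,j). if j = Suc i then 1 else 0)"

definition dsum :: "complex mat \<Rightarrow> complex mat \<Rightarrow> complex mat" where
  "dsum A B = four_block_mat A (0\<^sub>m (dim_row A) (dim_col B)) (0\<^sub>m (dim_row B) (dim_col A)) B"

definition ReM :: "complex mat \<Rightarrow> complex mat" where
  "ReM A = (1/2 :: complex) \<cdot>\<^sub>m (A + mat_adjoint A)"

text \<open>Eigenvalues (with multiplicity, as roots of the characteristic polynomial) of a
  Hermitian matrix, as reals in non-increasing order; lambda_k A is the k-th one (k \<ge> 1).\<close>
definition eigs_desc :: "complex mat \<Rightarrow> real list" where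
  "eigs_desc A = rev (sorted_list_of_multiset (image_mset Re (proots (char_poly A))))"

definition lambda_k :: "nat \<Rightarrow> complex mat \<Rightarrow> real" where
  "lambda_k k A = eigs_desc A ! (k - 1)"

definition T0 :: "nat \<Rightarrow> nat \<Rightarrow> complex \<Rightarrow> complex \<Rightarrow> real \<Rightarrow> complex mat" where
  "T0 n m \<alpha> \<beta> \<psi> = dsum (exp (- \<i> * of_real \<psi>) \<cdot>\<^sub>m jordan0 n)
                          (of_real (cmod (\<beta> - \<alpha>)) \<cdot>\<^sub>m 1\<^sub>m m)"

definition phi :: "nat \<Rightarrow> nat \<Rightarrow> real" where
  "phi n k = real k * pi / (real n + 1)"

definition psi_km :: "nat \<Rightarrow> nat \<Rightarrow> nat \<Rightarrow> real" where
  "psi_km n k m = (real k - real m) * pi / (real n + 1)"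

text \<open>D_k and C_{k,m}; r stands for |beta - alpha|.\<close>
definition D_set :: "nat \<Rightarrow> real \<Rightarrow> nat \<Rightarrow> real set" where
  "D_set n r k = {\<theta>. r * cos \<theta> \<le> cos (phi n k)}"

definition C_set :: "nat \<Rightarrow> real \<Rightarrow> nat \<Rightarrow> nat \<Rightarrow> real set" where
  "C_set n r k m = (if k > m then {\<theta>. r * cos \<theta> > cos (psi_km n k m)} else {})"

end

theory Submission
  imports Defs
begin


lemma size_filter_mset_card:
  "size (filter_mset P (mset xs)) = card {j. j < length xs \<and> P (xs ! j)}"
  by (metis length_filter_conv_card mset_filter size_mset)

lemma nth_desc:
  fixes M :: "real multiset"
  assumes gt: "size (filter_mset (\<lambda>x. x > v) M) < k"
    and ge: "k \<le> size (filter_mset (\<lambda>x. x \<ge> v) M)" and k1: "k \<ge> 1"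
  shows "rev (sorted_list_of_multiset M) ! (k-1) = v"
proof -
  define zs where "zs = rev (sorted_list_of_multiset M)"
  have mz: "mset zs = M" unfolding zs_def by simp
  have sz: "sorted_wrt (\<ge>) zs" unfolding zs_def sorted_wrt_rev
    by (simp add: sorted_sorted_list_of_multiset)
  have mono: "zs ! j \<ge> zs ! i" if "j \<le> i" "i < length zs" for i j
    using sz that by (metis le_neq_implies_less order_refl sorted_wrt_nth_less)
  have "k \<le> size M" using ge by (metis size_filter_mset_lesseq order_trans)
  hence len: "k - 1 < length zs" using k1 mz by (metis One_nat_def Suc_le_lessD Suc_pred size_mset less_le_trans le_refl) 
  show ?thesis unfolding zs_def[symmetric]
  proof (rule ccontr)
    assume ne: "zs ! (k-1) \<noteq> v"
    show False
    proof (cases "zs ! (k-1) > v")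
      case True
      have "{0..k-1} \<subseteq> {j. j < length zs \<and> zs ! j > v}"
        using mono[OF _ len] True len by force
      hence "card {0..k-1} \<le> card {j. j < length zs \<and> zs ! j > v}"
        by (intro card_mono) auto
      hence "k \<le> size (filter_mset (\<lambda>x. x > v) M)"
        using k1 unfolding mz[symmetric] size_filter_mset_card by simp
      thus False using gt by simp
    next
      case False
      hence lt: "zs ! (k-1) < v" using ne by simp
      have "{j. j < length zs \<and> zs ! j \<ge> v} \<subseteq> {0..<k-1}"
      proof
        fix j assume "j \<in> {j. j < length zs \<and> zs ! j \<ge> v}"
        hence j: "j < length zs" "zs ! j \<ge> v" by auto
        show "j \<in> {0..<k-1}"
        proof (rule ccontr)
          assume "j \<notin> {0..<k-1}"
          hence "k - 1 \<le> j" by simp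
          from mono[OF this j(1)] lt j(2) show False by simp
        qed
      qed
      hence "card {j. j < length zs \<and> zs ! j \<ge> v} \<le> card {0..<k-1}"
        by (intro card_mono) auto
      hence "size (filter_mset (\<lambda>x. x \<ge> v) M) \<le> k - 1"
        unfolding mz[symmetric] size_filter_mset_card by simp
      thus False using ge k1 by simp
    qed
  qed
qed

lemma count_img: assumes "finite A" shows
  "size (filter_mset P (image_mset f (mset_set A) + replicate_mset m v)) =
   card {j\<in>A. P (f j)} + (if P v then m else 0)"
proof -
  have "filter_mset P (image_mset f (mset_set A)) = image_mset f (filter_mset (\<lambda>x. P (f x)) (mset_set A))"
    by (simp add: filter_mset_image_mset)
  also have "filter_mset (\<lambda>x. P (f x)) (mset_set A) = mset_set {j\<in>A. P (f j)}"
    using assms by (simp add: filter_mset_mset_set)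
  moreover have "filter_mset P (replicate_mset m v) = (if P v then replicate_mset m v else {#})"
    by (induct m) auto
  ultimately show ?thesis by simp
qed

lemma cmono:
  assumes "i \<le> n+1" "j \<le> n+1"
  shows "cos (real i * pi / (real n + 1)) < cos (real j * pi / (real n + 1)) \<longleftrightarrow> j < i"
proof -
  have a: "0 \<le> real i * pi / (real n + 1)" "real i * pi / (real n + 1) \<le> pi"
   "0 \<le> real j * pi / (real n + 1)" "real j * pi / (real n + 1) \<le> pi"
  proof -
    have "real i * pi \<le> (real n + 1) * pi" "real j * pi \<le> (real n + 1) * pi"
      using assms by (intro mult_right_mono; simp)+
    thus "0 \<le> real i * pi / (real n + 1)" "real i * pi / (real n + 1) \<le> pi"
     "0 \<le> real j * pi / (real n + 1)" "real j * pi / (real n + 1) \<le> pi"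
      by (auto simp: field_simps)
  qed
  have "cos (real i * pi / (real n + 1)) < cos (real j * pi / (real n + 1)) \<longleftrightarrow>
     real j * pi / (real n + 1) < real i * pi / (real n + 1)"
    using cos_mono_less_eq[OF a] by simp
  also have "\<dots> \<longleftrightarrow> j < i" using pi_gt_zero by (simp add: divide_less_cancel)
  finally show ?thesis .
qed

lemma final_cases:
  fixes n m k :: nat and v :: real
  defines "c \<equiv> (\<lambda>j::nat. cos (real j * pi / (real n + 1)))"
  defines "L \<equiv> rev (sorted_list_of_multiset (image_mset c (mset_set {1..n}) + replicate_mset m v)) ! (k-1)"
  assumes k: "k \<in> {1..n}"
  shows "(k > m \<and> v > c (k-m) \<longrightarrow> L = c (k-m))
       \<and> (v > c k \<and> (k > m \<longrightarrow> v \<le> c (k-m)) \<longrightarrow> L = v)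
       \<and> (v \<le> c k \<longrightarrow> L = c k)"
proof -
  have lt: "c i < c j \<longleftrightarrow> j < i" if "i \<le> n+1" "j \<le> n+1" for i j
    unfolding c_def using cmono[OF that] .
  have le: "c i \<le> c j \<longleftrightarrow> j \<le> i" if "i \<le> n+1" "j \<le> n+1" for i j
    using lt[OF that(2,1)] by linarith
  let ?M = "image_mset c (mset_set {1..n}) + replicate_mset m v"
  have cnt: "size (filter_mset P ?M) = card {j\<in>{1..n}. P (c j)} + (if P v then m else 0)" for P
    by (rule count_img) simp
  have k1: "k \<ge> 1" "k \<le> n" using k by auto
  have A: "L = c (k-m)" if "k > m" "v > c (k-m)"
  proof -
    have s1: "{j\<in>{1..n}. c j > c (k-m)} = {1..<k-m}" using k1 that(1) by (auto simp: lt)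
    have s2: "{j\<in>{1..n}. c j \<ge> c (k-m)} = {1..k-m}" using k1 that(1) by (auto simp: le)
    show ?thesis unfolding L_def
      by (rule nth_desc, unfold cnt s1 s2) (use that k1 in auto)
  qed
  have B: "L = v" if "v > c k" "k > m \<longrightarrow> v \<le> c (k-m)"
  proof -
    have s1: "{j\<in>{1..n}. c j > v} \<subseteq> {1..<k}"
    proof
      fix j assume "j \<in> {j\<in>{1..n}. c j > v}"
      hence j: "j \<in> {1..n}" "c j > c k" using that by auto
      thus "j \<in> {1..<k}" using lt[of k j] k1 by auto
    qed
    have c1: "card {j\<in>{1..n}. c j > v} \<le> k - 1"
      using card_mono[OF _ s1] by simp
    have c2: "k \<le> card {j\<in>{1..n}. c j \<ge> v} + m"
    proof (cases "k > m")
      case True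
      have "{1..k-m} \<subseteq> {j\<in>{1..n}. c j \<ge> v}"
      proof
        fix j assume "j \<in> {1..k-m}"
        hence "c j \<ge> c (k-m)" using le[of "k-m" j] k1 by auto
        thus "j \<in> {j\<in>{1..n}. c j \<ge> v}" using that True \<open>j \<in> {1..k-m}\<close> k1 by auto
      qed
      from card_mono[OF _ this] True show ?thesis by simp
    qed simp
    show ?thesis unfolding L_def
      by (rule nth_desc, unfold cnt) (use c1 c2 k1 in auto)
  qed
  have C: "L = c k" if "v \<le> c k"
  proof -
    have s1: "{j\<in>{1..n}. c j > c k} = {1..<k}" using k1 by (auto simp: lt)
    have s2: "{j\<in>{1..n}. c j \<ge> c k} = {1..k}" using k1 by (auto simp: le)
    show ?thesis unfolding L_def
      by (rule nth_desc, unfold cnt s1 s2) (use that k1 in auto)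
  qed
  show ?thesis using A B C by blast
qed



definition Btri :: "nat \<Rightarrow> complex \<Rightarrow> complex mat" where
  "Btri n w = mat n n (\<lambda>(i,j). if j = Suc i then w/2 else if i = Suc j then cnj w/2 else 0)"

lemma Btri_eig:
  assumes w: "w * cnj w = 1" and j: "j \<in> {1..n}"
  shows "eigenvalue (Btri n w) (of_real (cos (real j * pi / (real n + 1))))"
proof -
  define t where "t = real j * pi / (real n + 1)"
  define s where "s = (\<lambda>l::nat. complex_of_real (sin (real l * t)))"
  define xf where "xf = (\<lambda>l::nat. cnj w ^ l * s (Suc l))"
  define x where "x = vec n xf"
  have s0: "s 0 = 0" unfolding s_def by simp
  have sn: "s (Suc n) = 0" unfolding s_def t_def
  proof -
    have "real (Suc n) * (real j * pi / (real n + 1)) = real j * pi" by (simp add: field_simps)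
    thus "complex_of_real (sin (real (Suc n) * (real j * pi / (real n + 1)))) = 0"
      by (simp add: sin_npi)
  qed
  have trig: "s (Suc (Suc i)) + s i = 2 * complex_of_real (cos t) * s (Suc i)" for i
  proof -
    have "sin (real (Suc (Suc i)) * t) + sin (real i * t) = sin (real (Suc i) * t + t) + sin (real (Suc i) * t - t)"
      by (simp add: algebra_simps)
    also have "\<dots> = 2 * cos t * sin (real (Suc i) * t)" by (simp add: sin_add sin_diff)
    finally show ?thesis unfolding s_def by (metis of_real_add of_real_mult of_real_numeral)
  qed
  have t0: "0 < t" "t < pi"
  proof -
    have "real j * pi < (real n + 1) * pi" using j by (intro mult_strict_right_mono) auto
    thus "0 < t" "t < pi" using j unfolding t_def by (auto simp: field_simps)
  qed
  have "x $ 0 \<noteq> 0" using j t0 unfolding x_def xf_def s_def using sin_gt_zero[OF t0] by simp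
  moreover have "0 < n" using j by simp
  ultimately have xnz: "x \<noteq> 0\<^sub>v n" by auto
  have "Btri n w *\<^sub>v x = complex_of_real (cos t) \<cdot>\<^sub>v x"
  proof (rule eq_vecI)
    fix i assume i: "i < dim_vec (complex_of_real (cos t) \<cdot>\<^sub>v x)"
    hence i: "i < n" unfolding x_def by simp
    have "(Btri n w *\<^sub>v x) $ i = (\<Sum>l\<in>{0..<n}. Btri n w $$ (i,l) * xf l)"
      using i unfolding x_def Btri_def by (simp add: row_def scalar_prod_def)
    also have "\<dots> = (\<Sum>l\<in>{0..<n}. (if l = Suc i then w/2 * xf l else 0) + (if Suc l = i then cnj w/2 * xf l else 0))"
      by (rule sum.cong) (use i in \<open>auto simp: Btri_def\<close>)
    also have "\<dots> = (if Suc i < n then w/2 * xf (Suc i) else 0) + (if i > 0 then cnj w/2 * xf (i-1) else 0)"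
    proof -
      have "(\<Sum>l\<in>{0..<n}. (if Suc l = i then cnj w/2 * xf l else 0)) = (if i > 0 then cnj w/2 * xf (i-1) else 0)"
      proof (cases i)
        case (Suc i')
        have "(\<Sum>l\<in>{0..<n}. (if Suc l = i then cnj w/2 * xf l else 0)) = (\<Sum>l\<in>{0..<n}. (if l = i' then cnj w/2 * xf l else 0))"
          using Suc by (intro sum.cong) auto
        thus ?thesis using Suc i by simp
      qed simp
      thus ?thesis by (simp add: sum.distrib)
    qed
    also have "\<dots> = cnj w ^ i / 2 * s (Suc (Suc i)) + cnj w ^ i / 2 * s i"
    proof -
      have a: "(if Suc i < n then w/2 * xf (Suc i) else 0) = cnj w ^ i / 2 * s (Suc (Suc i))"
      proof (cases "Suc i < n")
        case True
        have "w/2 * xf (Suc i) = (w * cnj w) * cnj w ^ i / 2 * s (Suc (Suc i))"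
          unfolding xf_def by (simp add: algebra_simps)
        thus ?thesis using True w by simp
      next
        case False
        hence "Suc (Suc i) = Suc n" using i by simp
        thus ?thesis using False sn by simp
      qed
      have b: "(if i > 0 then cnj w/2 * xf (i-1) else 0) = cnj w ^ i / 2 * s i"
      proof (cases i)
        case (Suc i')
        thus ?thesis unfolding xf_def by (simp add: algebra_simps)
      qed (simp add: s0)
      show ?thesis by (simp only: a b)
    qed
    also have "\<dots> = cnj w ^ i / 2 * (s (Suc (Suc i)) + s i)" by (simp add: algebra_simps)
    also have "\<dots> = complex_of_real (cos t) * xf i" unfolding trig xf_def by (simp add: algebra_simps)
    also have "\<dots> = (complex_of_real (cos t) \<cdot>\<^sub>v x) $ i" using i unfolding x_def by simp
    finally show "(Btri n w *\<^sub>v x) $ i = (complex_of_real (cos t) \<cdot>\<^sub>v x) $ i" .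
  next
    show "dim_vec (Btri n w *\<^sub>v x) = dim_vec (complex_of_real (cos t) \<cdot>\<^sub>v x)"
      unfolding x_def Btri_def by simp
  qed
  moreover have "x \<in> carrier_vec (dim_row (Btri n w))" unfolding x_def Btri_def by simp
  ultimately show ?thesis unfolding eigenvalue_def eigenvector_def t_def
    using xnz by (auto simp: Btri_def)
qed



lemma msub_eq: "A \<subseteq># B \<Longrightarrow> size B \<le> size A \<Longrightarrow> A = B"
  by (metis size_Diff_submset size_eq_0_iff_empty subset_mset.add_diff_inverse add.right_neutral diff_is_0_eq)

lemma proots_Btri:
  assumes w: "w * cnj w = 1"
  shows "proots (char_poly (Btri n w)) =
     image_mset (\<lambda>j. complex_of_real (cos (real j * pi / (real n + 1)))) (mset_set {1..n})"
proof -
  let ?f = "\<lambda>j. complex_of_real (cos (real j * pi / (real n + 1)))"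
  have Bc: "Btri n w \<in> carrier_mat n n" unfolding Btri_def by simp
  have inj: "inj_on ?f {1..n}"
  proof
    fix i j assume ij: "i \<in> {1..n}" "j \<in> {1..n}" "?f i = ?f j"
    hence "cos (real i * pi / (real n + 1)) = cos (real j * pi / (real n + 1))" by simp
    thus "i = j" using cmono[of i n j] cmono[of j n i] ij(1,2) by force
  qed
  have eq: "image_mset ?f (mset_set {1..n}) = mset_set (?f ` {1..n})"
    by (rule image_mset_mset_set[OF inj])
  have roots: "poly (char_poly (Btri n w)) (?f j) = 0" if "j \<in> {1..n}" for j
    using Btri_eig[OF w that] eigenvalue_root_char_poly[OF Bc] by blast
  have nz: "char_poly (Btri n w) \<noteq> 0"
    using degree_monic_char_poly[OF Bc] by auto
  have sub: "mset_set (?f ` {1..n}) \<subseteq># proots (char_poly (Btri n w))"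
  proof (rule mset_subset_eqI)
    fix x
    show "count (mset_set (?f ` {1..n})) x \<le> count (proots (char_poly (Btri n w))) x"
    proof (cases "x \<in> ?f ` {1..n}")
      case True
      then obtain j where j: "j \<in> {1..n}" "x = ?f j" by auto
      have "x \<in># proots (char_poly (Btri n w))" using roots[OF j(1)] j(2) nz by simp
      thus ?thesis using True by (simp add: count_eq_zero_iff[symmetric] Suc_le_eq)
    qed simp
  qed
  have "size (proots (char_poly (Btri n w))) = n"
    using size_proots_complex degree_monic_char_poly[OF Bc] by simp
  moreover have "size (mset_set (?f ` {1..n})) = n"
    using card_image[OF inj] by simp
  ultimately show ?thesis unfolding eq by (intro msub_eq[OF sub, symmetric]) simp
qed

lemma char_poly_block:
  fixes A D :: "'a :: idom mat"
  assumes A: "A \<in> carrier_mat n n" and D: "D \<in> carrier_mat m m"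
  shows "char_poly (four_block_mat A (0\<^sub>m n m) (0\<^sub>m m n) D) = char_poly A * char_poly D"
proof -
  let ?cm = "\<lambda> A. [:0, 1:] \<cdot>\<^sub>m 1\<^sub>m (dim_row A) + map_mat (\<lambda>a. [:- a:]) A"
  have "char_poly (four_block_mat A (0\<^sub>m n m) (0\<^sub>m m n) D) = det (?cm (four_block_mat A (0\<^sub>m n m) (0\<^sub>m m n) D))"
    unfolding char_poly_defs by simp
  also have "?cm (four_block_mat A (0\<^sub>m n m) (0\<^sub>m m n) D) = four_block_mat (?cm A) (0\<^sub>m n m) (0\<^sub>m m n) (?cm D)"
    by (rule eq_matI, insert A D, auto simp: one_poly_def)
  also have "det \<dots> = det (?cm A) * det (?cm D)"
    by (rule det_four_block_mat_upper_right_zero[of _ n _ m], insert A D, auto)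
  also have "\<dots> = char_poly A * char_poly D" unfolding char_poly_defs ..
  finally show ?thesis .
qed

lemma proots_scalar_id:
  "proots (char_poly ((v::complex) \<cdot>\<^sub>m 1\<^sub>m m)) = replicate_mset m v"
proof -
  have c: "v \<cdot>\<^sub>m 1\<^sub>m m \<in> carrier_mat m m" by simp
  have ut: "upper_triangular (v \<cdot>\<^sub>m 1\<^sub>m m)" unfolding upper_triangular_def by auto
  have "char_poly (v \<cdot>\<^sub>m 1\<^sub>m m) = [:-v,1:] ^ m"
  proof -
    have "map ((\<lambda>a. [:- a, 1:]) \<circ> (\<lambda>i. (v \<cdot>\<^sub>m 1\<^sub>m m) $$ (i, i))) [0..<m] = replicate m [:-v,1:]"
      by (rule nth_equalityI) auto
    thus ?thesis unfolding char_poly_upper_triangular[OF c ut] diag_mat_def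
      by (simp only: map_map index_smult_mat(2) index_one_mat(2) prod_list_replicate)
  qed
  thus ?thesis by (simp add: proots_power)
qed



lemma ReM_T0:
  fixes r :: real
  shows "ReM (exp (\<i> * of_real \<theta>) \<cdot>\<^sub>m dsum (exp (- \<i> * of_real \<psi>) \<cdot>\<^sub>m jordan0 n) (of_real r \<cdot>\<^sub>m 1\<^sub>m m))
    = four_block_mat (Btri n (exp (\<i> * of_real (\<theta> - \<psi>)))) (0\<^sub>m n m) (0\<^sub>m m n)
        (of_real (r * cos \<theta>) \<cdot>\<^sub>m 1\<^sub>m m)"
proof -
  have e: "exp (\<i> * of_real \<theta>) * exp (- \<i> * of_real \<psi>) = exp (\<i> * of_real (\<theta> - \<psi>))"
    by (simp add: exp_add[symmetric] algebra_simps)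
  have c: "(exp (\<i> * of_real \<theta>) + cnj (exp (\<i> * of_real \<theta>))) = 2 * of_real (cos \<theta>)"
    by (simp add: cis_conv_exp[symmetric] complex_eq_iff)
  have c2: "(exp (\<i> * of_real \<theta>) * of_real r + cnj (exp (\<i> * of_real \<theta>) * of_real r)) / 2 = of_real (r * cos \<theta>)"
  proof -
    have "(exp (\<i> * of_real \<theta>) * of_real r + cnj (exp (\<i> * of_real \<theta>) * of_real r)) / 2
       = of_real r * (exp (\<i> * of_real \<theta>) + cnj (exp (\<i> * of_real \<theta>))) / 2"
      by (simp add: algebra_simps)
    also have "\<dots> = of_real (r * cos \<theta>)" unfolding c by simp
    finally show ?thesis .
  qed
  have e2: "cnj (exp (\<i> * of_real \<theta>) * exp (- \<i> * of_real \<psi>)) = cnj (exp (\<i> * of_real (\<theta> - \<psi>)))"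
    using e by simp
  have f1: "exp (\<i> * complex_of_real \<theta>) * exp (- (\<i> * complex_of_real \<psi>)) =
         exp (\<i> * (complex_of_real \<theta> - complex_of_real \<psi>))" using e by simp
  have f2: "cnj (exp (\<i> * complex_of_real \<theta>)) * cnj (exp (- (\<i> * complex_of_real \<psi>))) =
         cnj (exp (\<i> * (complex_of_real \<theta> - complex_of_real \<psi>)))" using e2 by simp
  have f3: "exp (\<i> * complex_of_real \<theta>) * complex_of_real r +
              cnj (exp (\<i> * complex_of_real \<theta>)) * complex_of_real r =
              complex_of_real r * complex_of_real (cos \<theta>) * 2"
    using c by (metis distrib_right mult.commute mult.left_commute)
  show ?thesis
    by (rule eq_matI) (auto simp: f1 f2 f3 ReM_def dsum_def jordan0_def Btri_def mat_adjoint_def e e2 c2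
         mat_of_rows_def)
qed



theorem lemma3p1:
  fixes n m k :: nat and \<alpha> \<beta> :: complex and \<psi> \<theta> :: real
  assumes "n \<ge> 2" and "m \<ge> 1"
    and "\<beta> - \<alpha> = of_real (cmod (\<beta> - \<alpha>)) * exp (\<i> * of_real \<psi>)"
    and "k \<in> {1..n}"
    and "\<theta> \<in> {0..2*pi}"
  shows "(\<theta> \<in> C_set n (cmod (\<beta> - \<alpha>)) k m \<longrightarrow>
            lambda_k k (ReM (exp (\<i> * of_real \<theta>) \<cdot>\<^sub>m T0 n m \<alpha> \<beta> \<psi>)) = cos (psi_km n k m))
       \<and> (\<theta> \<notin> D_set n (cmod (\<beta> - \<alpha>)) k \<union> C_set n (cmod (\<beta> - \<alpha>)) k m \<longrightarrow>
            lambda_k k (ReM (exp (\<i> * of_real \<theta>) \<cdot>\<^sub>m T0 n m \<alpha> \<beta> \<psi>)) = cmod (\<beta> - \<alpha>) * cos \<theta>)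
       \<and> (\<theta> \<in> D_set n (cmod (\<beta> - \<alpha>)) k \<longrightarrow>
            lambda_k k (ReM (exp (\<i> * of_real \<theta>) \<cdot>\<^sub>m T0 n m \<alpha> \<beta> \<psi>)) = cos (phi n k))"
proof -
  define r where "r = cmod (\<beta> - \<alpha>)"
  define v where "v = r * cos \<theta>"
  define w where "w = exp (\<i> * of_real (\<theta> - \<psi>))"
  define c where "c = (\<lambda>j::nat. cos (real j * pi / (real n + 1)))"
  have wc: "w = cis (\<theta> - \<psi>)" unfolding w_def by (simp add: cis_conv_exp)
  have w1: "w * cnj w = 1" unfolding wc
    by (simp add: complex_eq_iff sin_cos_squared_add3)
  have M: "ReM (exp (\<i> * of_real \<theta>) \<cdot>\<^sub>m T0 n m \<alpha> \<beta> \<psi>)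
     = four_block_mat (Btri n w) (0\<^sub>m n m) (0\<^sub>m m n) (of_real v \<cdot>\<^sub>m 1\<^sub>m m)"
    unfolding T0_def ReM_T0 w_def v_def r_def ..
  have cp: "char_poly (ReM (exp (\<i> * of_real \<theta>) \<cdot>\<^sub>m T0 n m \<alpha> \<beta> \<psi>))
     = char_poly (Btri n w) * char_poly (of_real v \<cdot>\<^sub>m 1\<^sub>m m)"
    unfolding M by (rule char_poly_block) (auto simp: Btri_def)
  have nz1: "char_poly (Btri n w) \<noteq> 0"
    using degree_monic_char_poly[of "Btri n w" n] by (auto simp: Btri_def)
  have nz2: "char_poly (of_real v \<cdot>\<^sub>m 1\<^sub>m m :: complex mat) \<noteq> 0"
    using degree_monic_char_poly[of "of_real v \<cdot>\<^sub>m 1\<^sub>m m :: complex mat" m] by auto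
  have pr: "proots (char_poly (ReM (exp (\<i> * of_real \<theta>) \<cdot>\<^sub>m T0 n m \<alpha> \<beta> \<psi>)))
     = image_mset (\<lambda>j. complex_of_real (c j)) (mset_set {1..n}) + replicate_mset m (of_real v)"
    unfolding cp proots_mult[OF nz1 nz2] proots_Btri[OF w1] proots_scalar_id c_def ..
  have L: "lambda_k k (ReM (exp (\<i> * of_real \<theta>) \<cdot>\<^sub>m T0 n m \<alpha> \<beta> \<psi>)) =
     rev (sorted_list_of_multiset (image_mset c (mset_set {1..n}) + replicate_mset m v)) ! (k-1)"
    unfolding lambda_k_def eigs_desc_def pr by (simp add: multiset.map_comp o_def)
  define Lam where "Lam = lambda_k k (ReM (exp (\<i> * of_real \<theta>) \<cdot>\<^sub>m T0 n m \<alpha> \<beta> \<psi>))"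
  have fc: "(k > m \<and> v > c (k-m) \<longrightarrow> Lam = c (k-m))
       \<and> (v > c k \<and> (k > m \<longrightarrow> v \<le> c (k-m)) \<longrightarrow> Lam = v)
       \<and> (v \<le> c k \<longrightarrow> Lam = c k)"
    unfolding Lam_def L c_def by (rule final_cases[OF assms(4)])
  have pk: "cos (phi n k) = c k" unfolding phi_def c_def ..
  have qk: "cos (psi_km n k m) = c (k - m)" if "k > m" unfolding psi_km_def c_def using that by (simp add: of_nat_diff)
  have Cm: "\<theta> \<in> C_set n r k m \<longleftrightarrow> k > m \<and> v > c (k-m)"
    unfolding C_set_def v_def using qk by auto
  have Dm: "\<theta> \<in> D_set n r k \<longleftrightarrow> v \<le> c k"
    unfolding D_set_def v_def using pk by auto
  show ?thesis
    unfolding r_def[symmetric] Un_iff Cm Dm pk Lam_def[symmetric] v_def[symmetric]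
    using fc qk by (metis not_less)
qed


end
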